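(* For every $n\in[-2,\infty)$ and $s>s^*_n$, the universal profile $f_n(s)$ is strictly decreasing as a function of $s$ on $(s_n^*,\infty)$, and (for fixed $s$) strictly decreasing as a function of $n$ over those $n\ge-2$ with $s>s^*_n$.
   Context: For $k>-1$ and $s\in\mathbb R$ let $I_k(s)=\int_0^\infty x^ke^{-\frac14x^4-\frac12sx^2}dx$. For $n>-2$ define $f_n(s)=\frac{I_{n+1}(s)}{I_{n+3}(s)+sI_{n+1}(s)}$ (which equals $\frac{I_{n+1}(s)}{nI_{n-1}(s)}=\frac{\int_{\mathbb R^n}|x|^2e^{-\frac14|x|^4-\frac s2|x|^2}dx}{n\int_{\mathbb R^n}e^{-\frac14|x|^4-\frac s2|x|^2}dx}$ for $n>0$), and $f_{-2}(s)=s^{-1}$. These satisfy $f_n(s)=\frac{1}{(n+2)f_{n+2}(s)+s}$. Let $s_n^*=-\infty$ for $n\ge0$ and $s_n^*=\sup\{s:(n+2)f_{n+2}(s)+s=0\}$ for $n\in[-2,0)$. *)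

theory Defs
  imports "HOL-Analysis.Analysis"
begin

text \<open>I_k(s) = int_0^infty x^k exp(-x^4/4 - s x^2/2) dx  (meaningful for k > -1).\<close>
definition I :: "real \<Rightarrow> real \<Rightarrow> real" where
  "I k s = (LINT x:{0<..}|lborel. x powr k * exp (- (x ^ 4) / 4 - s * x\<^sup>2 / 2))"

text \<open>Universal profile f_n(s); for n > -2 via the integral formula, f_{-2}(s) = 1/s.
  Values for n < -2 are irrelevant.\<close>
definition f :: "real \<Rightarrow> real \<Rightarrow> real" where
  "f n s = (if n = -2 then 1 / s
            else I (n + 1) s / (I (n + 3) s + s * I (n + 1) s))"

definition sstar :: "real \<Rightarrow> ereal" where
  "sstar n = (if 0 \<le> n then -\<infinity>
              else Sup (ereal ` {s. (n + 2) * f (n + 2) s + s = 0}))"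

end

theory Submission
  imports Defs "HOL-Real_Asymp.Real_Asymp"
begin


definition E :: "real \<Rightarrow> real \<Rightarrow> real" where
  "E s x = exp (- (x ^ 4) / 4 - s * x\<^sup>2 / 2)"

lemma I_alt: "I k s = (LINT x:{0<..}|lborel. x powr k * E s x)"
  unfolding I_def E_def by simp

lemma gamma_int:
  assumes "k > -1"
  shows "set_integrable lborel {0<..} (\<lambda>t::real. t powr k / exp t)"
proof -
  have "((\<lambda>t. t powr (k + 1 - 1) / exp t) has_integral Gamma (k+1)) {0..}"
    by (rule Gamma_integral_real) (use assms in auto)
  hence "(\<lambda>t. t powr k / exp t) integrable_on {0..}" by (auto simp: integrable_on_def)
  hence "(\<lambda>t. t powr k / exp t) absolutely_integrable_on {0..}"
    by (subst absolutely_integrable_on_iff_nonneg) auto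
  hence "set_integrable lborel {0..} (\<lambda>t::real. t powr k / exp t)"
    unfolding set_integrable_def
    by (subst (asm) integrable_completion) auto
  thus ?thesis by (rule set_integrable_subset) auto
qed

lemma phi_bound:
  fixes x s :: real assumes "x \<ge> 0"
  shows "- (x ^ 4) / 4 - s * x\<^sup>2 / 2 \<le> 2 + s\<^sup>2/2 - x"
proof -
  have "0 \<le> (x^2 + 2 * s)^2" "0 \<le> (x^2 - 2)^2" "0 \<le> (x - 1)^2" by simp_all
  thus ?thesis by (simp add: power2_eq_square algebra_simps power4_eq_xxxx)
qed

lemma E_pos: "E s x > 0" by (simp add: E_def)
lemma E_ne[simp]: "E s x \<noteq> 0" by (simp add: E_def)

lemma meas[measurable]: "(\<lambda>x. x powr k * E s x) \<in> borel_measurable borel"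
  unfolding E_def by measurable

lemma int_E:
  assumes "k > -1"
  shows "set_integrable lborel {0<..} (\<lambda>x. x powr k * E s x)"
  unfolding set_integrable_def
proof (rule Bochner_Integration.integrable_bound[OF _ _ AE_I2])
  show "integrable lborel (\<lambda>x. indicat_real {0<..} x *\<^sub>R (exp (2 + s\<^sup>2/2) * (x powr k / exp x)))"
    using integrable_mult_right[OF gamma_int[OF assms, unfolded set_integrable_def], of "exp (2 + s\<^sup>2/2)"]
    by (simp add: mult_ac)
next
  fix x :: real
  show "norm (indicat_real {0<..} x *\<^sub>R (x powr k * E s x))
     \<le> norm (indicat_real {0<..} x *\<^sub>R (exp (2 + s\<^sup>2/2) * (x powr k / exp x)))"
  proof (cases "x > 0")
    case True
    have "E s x \<le> exp (2 + s\<^sup>2/2 - x)"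
      unfolding E_def using phi_bound[of x s] True by simp
    also have "\<dots> = exp (2 + s\<^sup>2/2) / exp x" by (simp add: exp_diff)
    finally have "x powr k * E s x \<le> x powr k * (exp (2 + s\<^sup>2/2) / exp x)"
      by (intro mult_left_mono) auto
    thus ?thesis using True E_pos[of s x] by (simp add: abs_mult mult_ac)
  qed simp
qed simp

lemma taylor_exp: "\<bar>exp (y::real) - 1 - y\<bar> \<le> exp \<bar>y\<bar> * y\<^sup>2 / 2"
proof -
  obtain t where t: "\<bar>t\<bar> \<le> \<bar>y\<bar>" "exp y = (\<Sum>m<2. y ^ m / fact m) + exp t / fact 2 * y ^ 2"
    using Maclaurin_exp_le[of y 2] by blast
  have "exp y - 1 - y = exp t / 2 * y\<^sup>2" using t(2) by (simp add: eval_nat_numeral)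
  moreover have "exp t \<le> exp \<bar>y\<bar>" using t(1) by simp
  hence "exp t / 2 * y\<^sup>2 \<le> exp \<bar>y\<bar> / 2 * y\<^sup>2" by (intro mult_right_mono) auto
  moreover have "0 \<le> exp t / 2 * y\<^sup>2" by simp
  ultimately show ?thesis by (simp only: abs_of_nonneg)
qed

lemma pw_bound:
  fixes x h s k :: real
  assumes x: "x > 0" and h: "\<bar>h\<bar> \<le> 1"
  shows "\<bar>x powr k * E (s+h) x - x powr k * E s x + h/2 * (x powr (k+2) * E s x)\<bar>
         \<le> h\<^sup>2/8 * (x powr (k+4) * E (s-1) x)"
proof -
  define y where "y = - h * x\<^sup>2 / 2"
  have e1: "E (s+h) x = E s x * exp y" unfolding E_def y_def by (simp add: exp_add[symmetric] algebra_simps)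
  have e2: "E (s-1) x = E s x * exp (x\<^sup>2/2)" unfolding E_def by (simp add: exp_add[symmetric] field_simps)
  have p2: "x powr (k+2) = x powr k * x\<^sup>2" using x by (simp add: powr_add)
  have p4: "x powr (k+4) = x powr k * x^4" using x by (simp add: powr_add)
  have "x powr k * E (s+h) x - x powr k * E s x + h/2 * (x powr (k+2) * E s x)
        = (x powr k * E s x) * (exp y - 1 - y)"
    unfolding e1 p2 y_def by (simp add: algebra_simps)
  hence "\<bar>x powr k * E (s+h) x - x powr k * E s x + h/2 * (x powr (k+2) * E s x)\<bar>
        = (x powr k * E s x) * \<bar>exp y - 1 - y\<bar>"
    using E_pos[of s x] by (simp add: abs_mult)
  also have "\<dots> \<le> (x powr k * E s x) * (exp \<bar>y\<bar> * y\<^sup>2 / 2)"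
    by (intro mult_left_mono taylor_exp) (use E_pos[of s x] in auto)
  also have "\<dots> \<le> (x powr k * E s x) * (exp (x\<^sup>2/2) * (h\<^sup>2 * x^4 / 8))"
  proof (intro mult_left_mono)
    have "\<bar>y\<bar> \<le> x\<^sup>2/2" unfolding y_def using h by (auto simp: abs_mult intro!: mult_left_le_one_le)
    hence "exp \<bar>y\<bar> \<le> exp (x\<^sup>2/2)" by simp
    moreover have "y\<^sup>2 / 2 = h\<^sup>2 * x^4 / 8" unfolding y_def by (simp add: power2_eq_square power4_eq_xxxx)
    ultimately show "exp \<bar>y\<bar> * y\<^sup>2 / 2 \<le> exp (x\<^sup>2/2) * (h\<^sup>2 * x^4 / 8)"
      by (metis mult_right_mono times_divide_eq_right zero_le_power2 divide_nonneg_pos zero_less_numeral)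
  qed (use E_pos[of s x] in auto)
  also have "\<dots> = h\<^sup>2/8 * (x powr (k+4) * E (s-1) x)"
    unfolding p4 e2 by (simp add: algebra_simps)
  finally show ?thesis .
qed

lemma int_bound:
  assumes k: "k > -1" and h: "\<bar>h\<bar> \<le> 1"
  shows "\<bar>I k (s+h) - I k s + h/2 * I (k+2) s\<bar> \<le> h\<^sup>2/8 * I (k+4) (s-1)"
proof -
  have i1: "set_integrable lborel {0<..} (\<lambda>x. x powr k * E (s+h) x)" by (rule int_E) (use k in auto)
  have i2: "set_integrable lborel {0<..} (\<lambda>x. x powr k * E s x)" by (rule int_E) (use k in auto)
  have i3: "set_integrable lborel {0<..} (\<lambda>x. h/2 * (x powr (k+2) * E s x))" by (intro set_integrable_mult_right int_E) (use k in auto)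
  have i4: "set_integrable lborel {0<..} (\<lambda>x. h\<^sup>2/8 * (x powr (k+4) * E (s-1) x))" by (intro set_integrable_mult_right int_E) (use k in auto)
  have iG: "set_integrable lborel {0<..} (\<lambda>x. x powr k * E (s+h) x - x powr k * E s x + h/2 * (x powr (k+2) * E s x))"
    using i1 i2 i3 by auto
  have eq: "(LINT x:{0<..}|lborel. x powr k * E (s+h) x - x powr k * E s x + h/2 * (x powr (k+2) * E s x))
      = I k (s+h) - I k s + h/2 * I (k+2) s"
    unfolding I_alt using i1 i2 i3 by (simp add: set_integral_add set_integral_diff)
  have "(LINT x:{0<..}|lborel. x powr k * E (s+h) x - x powr k * E s x + h/2 * (x powr (k+2) * E s x))
     \<le> (LINT x:{0<..}|lborel. h\<^sup>2/8 * (x powr (k+4) * E (s-1) x))"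
  proof (rule set_integral_mono[OF iG i4])
    fix x :: real assume "x \<in> {0<..}"
    thus "x powr k * E (s+h) x - x powr k * E s x + h/2 * (x powr (k+2) * E s x) \<le> h\<^sup>2/8 * (x powr (k+4) * E (s-1) x)"
      using order_trans[OF abs_ge_self pw_bound[OF _ h, of x k s]] by simp
  qed
  moreover have "- (LINT x:{0<..}|lborel. h\<^sup>2/8 * (x powr (k+4) * E (s-1) x)) \<le>
     (LINT x:{0<..}|lborel. x powr k * E (s+h) x - x powr k * E s x + h/2 * (x powr (k+2) * E s x))"
  proof -
    have "(LINT x:{0<..}|lborel. - (h\<^sup>2/8 * (x powr (k+4) * E (s-1) x))) \<le>
     (LINT x:{0<..}|lborel. x powr k * E (s+h) x - x powr k * E s x + h/2 * (x powr (k+2) * E s x))"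
    proof (rule set_integral_mono[OF _ iG])
      show "set_integrable lborel {0<..} (\<lambda>x. - (h\<^sup>2/8 * (x powr (k+4) * E (s-1) x)))"
        using integrable_minus[OF i4[unfolded set_integrable_def]] unfolding set_integrable_def by simp
      fix x :: real assume "x \<in> {0<..}"
      thus "- (h\<^sup>2/8 * (x powr (k+4) * E (s-1) x)) \<le> x powr k * E (s+h) x - x powr k * E s x + h/2 * (x powr (k+2) * E s x)"
        using order_trans[OF abs_ge_minus_self pw_bound[OF _ h, of x k s]] by (simp add: field_simps)
    qed
    thus ?thesis by (simp only: set_integral_uminus[OF i4])
  qed
  moreover have m: "(LINT x:{0<..}|lborel. h\<^sup>2/8 * (x powr (k+4) * E (s-1) x)) = h\<^sup>2/8 * I (k+4) (s-1)"
    unfolding I_alt by (rule set_integral_mult_right)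
  ultimately show ?thesis unfolding eq m by (intro abs_leI) linarith+
qed

lemma I_deriv:
  assumes k: "k > -1"
  shows "((\<lambda>s. I k s) has_real_derivative - I (k+2) s / 2) (at s)"
  unfolding DERIV_def
proof (rule LIM_zero_cancel, rule Lim_null_comparison)
  let ?C = "I (k+4) (s-1)"
  have main: "norm ((I k (s + h) - I k s) / h - - I (k + 2) s / 2) \<le> \<bar>h\<bar>/8 * ?C"
    if h: "h \<noteq> 0 \<and> dist h 0 < 1" for h
  proof -
    have b: "\<bar>I k (s+h) - I k s + h/2 * I (k+2) s\<bar> \<le> h\<^sup>2/8 * ?C"
      using int_bound[OF k, of h s] h by auto
    have "(I k (s + h) - I k s) / h - - I (k + 2) s / 2 = (I k (s+h) - I k s + h/2 * I (k+2) s) / h"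
      using h by (simp add: field_simps)
    hence "norm ((I k (s + h) - I k s) / h - - I (k + 2) s / 2) = \<bar>I k (s+h) - I k s + h/2 * I (k+2) s\<bar> / \<bar>h\<bar>"
      by (simp add: abs_divide)
    also have "\<dots> \<le> h\<^sup>2/8 * ?C / \<bar>h\<bar>"
      using b h by (intro divide_right_mono) auto
    also have "\<dots> = \<bar>h\<bar>/8 * ?C" using h by (simp add: power2_eq_square field_simps abs_mult_self_eq)
    finally show ?thesis .
  qed
  show "\<forall>\<^sub>F h in at 0. norm ((I k (s + h) - I k s) / h - - I (k + 2) s / 2) \<le> \<bar>h\<bar>/8 * ?C"
    unfolding eventually_at using main by (intro exI[of _ 1]) auto
  have "((\<lambda>h::real. \<bar>h\<bar>/8 * ?C) \<longlongrightarrow> \<bar>0\<bar>/8 * ?C) (at 0)"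
    by (intro tendsto_intros) simp
  thus "((\<lambda>h. \<bar>h\<bar>/8 * ?C) \<longlongrightarrow> 0) (at 0)" by simp
qed

lemma I_pos:
  assumes k: "k > -1"
  shows "I k s > 0"
proof -
  let ?g = "\<lambda>x. indicat_real {0<..} x *\<^sub>R (x powr k * E s x)"
  have int: "integrable lborel ?g" using int_E[OF k, of s] unfolding set_integrable_def .
  have nn: "AE x in lborel. 0 \<le> ?g x" by (auto simp: indicator_def intro!: AE_I2 mult_nonneg_nonneg less_imp_le[OF E_pos])
  have "I k s = integral\<^sup>L lborel ?g" unfolding I_alt set_lebesgue_integral_def ..
  moreover have "integral\<^sup>L lborel ?g \<ge> 0" by (rule integral_nonneg_AE[OF nn])
  moreover have "integral\<^sup>L lborel ?g \<noteq> 0"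
  proof
    assume "integral\<^sup>L lborel ?g = 0"
    hence "AE x in lborel. ?g x = 0" using integral_nonneg_eq_0_iff_AE[OF int nn] by simp
    hence "AE x in lborel. x \<notin> {0<..<1::real}"
    proof eventually_elim
      fix x :: real assume "?g x = 0"
      thus "x \<notin> {0<..<1}" by (cases "x > 0") (auto simp: indicator_def)
    qed
    hence "{0<..<1::real} \<in> null_sets lborel" by (subst AE_iff_null_sets) simp_all
    hence "emeasure lborel {0<..<1::real} = 0" by (simp add: null_sets_def)
    thus False by simp
  qed
  ultimately show ?thesis by linarith
qed



definition gI :: "real \<Rightarrow> real \<Rightarrow> real \<Rightarrow> real" where
  "gI k s x = (k+1) * (x powr k * E s x) - x powr (k+4) * E s x - s * (x powr (k+2) * E s x)"

lemma IBP_deriv: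
  assumes x: "x > 0"
  shows "((\<lambda>x. x powr (k+1) * E s x) has_real_derivative gI k s x) (at x)"
proof -
  have d: "((\<lambda>x. x powr (k+1) * exp (- (x ^ 4) / 4 - s * x\<^sup>2 / 2)) has_real_derivative
          (k+1) * x powr k * exp (- (x ^ 4) / 4 - s * x\<^sup>2 / 2) +
          x powr (k+1) * (exp (- (x ^ 4) / 4 - s * x\<^sup>2 / 2) * (- (x^3) - s * x))) (at x)"
    by (rule derivative_eq_intros refl | simp add: x)+
  have a: "x powr (k+4) = x powr (k+1) * x^3"
  proof -
    have "x powr (k+4) = x powr (k+1) * x powr 3" by (simp add: powr_add[symmetric] add_ac)
    also have "x powr 3 = x^3" using x by simp
    finally show ?thesis .
  qed
  have b: "x powr (k+2) = x powr (k+1) * x"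
  proof -
    have "x powr (k+1) * x = x powr (k+1) * x powr 1" using x by simp
    also have "\<dots> = x powr (k+1+1)" by (rule powr_add[symmetric])
    also have "k+1+1 = k+2" by simp
    finally show ?thesis by simp
  qed
  have eq: "(k+1) * x powr k * exp (- (x ^ 4) / 4 - s * x\<^sup>2 / 2) +
          x powr (k+1) * (exp (- (x ^ 4) / 4 - s * x\<^sup>2 / 2) * (- (x^3) - s * x)) = gI k s x"
  proof -
    have r: "\<And>A B X. (k+1)*A*X + B*(X*(-(x^3) - s*x)) = (k+1)*(A*X) - B*x^3*X - s*(B*x*X)"
      by (simp add: algebra_simps)
    show ?thesis unfolding gI_def E_def a b by (rule r)
  qed
  show ?thesis using d unfolding eq E_def .
qed

lemma lim0: "k > -1 \<Longrightarrow> ((\<lambda>x::real. x powr (k+1) * exp (- (x ^ 4) / 4 - s * x\<^sup>2 / 2)) \<longlongrightarrow> 0) (at_right 0)"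
  by real_asymp

lemma limInf: "((\<lambda>x::real. x powr (k+1) * exp (- (x ^ 4) / 4 - s * x\<^sup>2 / 2)) \<longlongrightarrow> 0) at_top"
  by real_asymp

lemma IBP:
  assumes k: "k > -1"
  shows "I (k+4) s + s * I (k+2) s = (k+1) * I k s"
proof -
  have i1: "set_integrable lborel {0<..} (\<lambda>x. (k+1) * (x powr k * E s x))" by (intro set_integrable_mult_right int_E) (use k in auto)
  have i2: "set_integrable lborel {0<..} (\<lambda>x. x powr (k+4) * E s x)" by (intro int_E) (use k in auto)
  have i3: "set_integrable lborel {0<..} (\<lambda>x. s * (x powr (k+2) * E s x))" by (intro set_integrable_mult_right int_E) (use k in auto)
  have ig: "set_integrable lborel {0<..} (gI k s)" unfolding gI_def using i1 i2 i3 by (intro set_integral_diff)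
  have "(LBINT x=0..\<infinity>. gI k s x) = 0 - 0"
  proof (rule interval_integral_FTC_integrable[where F = "\<lambda>x. x powr (k+1) * E s x"])
    fix x :: real assume "0 < ereal x" "ereal x < \<infinity>"
    hence x: "x > 0" by simp
    show "((\<lambda>x. x powr (k+1) * E s x) has_vector_derivative gI k s x) (at x)"
      using IBP_deriv[OF x] by (simp add: has_real_derivative_iff_has_vector_derivative)
    show "isCont (gI k s) x" unfolding gI_def E_def using x by (intro continuous_intros) auto
  next
    show "set_integrable lborel (einterval 0 \<infinity>) (gI k s)" using ig by (simp add: zero_ereal_def)
  next
    show "(((\<lambda>x. x powr (k+1) * E s x) \<circ> real_of_ereal) \<longlongrightarrow> 0) (at_right 0)"
      unfolding zero_ereal_def ereal_tendsto_simps E_def using lim0[OF k] .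
  next
    show "(((\<lambda>x. x powr (k+1) * E s x) \<circ> real_of_ereal) \<longlongrightarrow> 0) (at_left \<infinity>)"
      unfolding ereal_tendsto_simps E_def using limInf .
  qed simp
  hence "(LINT x:{0<..}|lborel. gI k s x) = 0"
    by (simp add: interval_integral_Ioi zero_ereal_def)
  moreover have "(LINT x:{0<..}|lborel. gI k s x) = (k+1) * I k s - I (k+4) s - s * I (k+2) s"
    unfolding gI_def I_alt using i1 i2 i3 by (simp add: set_integral_diff)
  ultimately show ?thesis by linarith
qed

definition DD :: "real \<Rightarrow> real \<Rightarrow> real" where
  "DD n t = I (n+3) t + t * I (n+1) t"

lemma DD_deriv:
  assumes n: "n > -2"
  shows "(DD n has_real_derivative - n * I (n+1) s / 2) (at s)"
proof -
  have d3: "((\<lambda>t. I (n+3) t) has_real_derivative - I (n+3+2) s / 2) (at s)"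
    by (rule I_deriv) (use n in auto)
  have d1: "((\<lambda>t. I (n+1) t) has_real_derivative - I (n+1+2) s / 2) (at s)"
    by (rule I_deriv) (use n in auto)
  have ibp: "I (n+1+4) s + s * I (n+1+2) s = (n+1+1) * I (n+1) s"
    by (rule IBP) (use n in auto)
  have e1: "n+3+2 = n+1+4" "n+1+2 = n+3" by simp_all
  have dm: "((\<lambda>t. t * I (n+1) t) has_real_derivative 1 * I (n+1) s + (- I (n+1+2) s / 2) * s) (at s)"
    by (rule DERIV_mult[OF DERIV_ident d1])
  have "(DD n has_real_derivative - I (n+3+2) s / 2 + (1 * I (n+1) s + (- I (n+1+2) s / 2) * s)) (at s)"
    unfolding DD_def[abs_def] by (rule DERIV_add[OF d3 dm])
  moreover have "- I (n+3+2) s / 2 + (1 * I (n+1) s + (- I (n+1+2) s / 2) * s) = - n * I (n+1) s / 2"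
    using ibp unfolding e1 by (simp add: algebra_simps)
  ultimately show ?thesis by simp
qed

lemma DD_cont: "n > -2 \<Longrightarrow> isCont (DD n) s"
  using DD_deriv DERIV_isCont by blast

lemma f_eq: "n > -2 \<Longrightarrow> f n t = I (n+1) t / DD n t"
  unfolding f_def DD_def by simp

lemma sstar_m2: "sstar (-2) = 0"
proof -
  have "{s. (-2 + 2) * f (-2 + 2) s + s = 0} = {0::real}" by auto
  thus ?thesis unfolding sstar_def by (simp add: zero_ereal_def)
qed

lemma DD_pos_nonneg: "n > -2 \<Longrightarrow> t \<ge> 0 \<Longrightarrow> DD n t > 0"
  unfolding DD_def using I_pos[of "n+3" t] I_pos[of "n+1" t]
  by (intro add_pos_nonneg) auto

lemma DD_pos:
  assumes n: "n > -2" and ss: "sstar n < ereal s"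
  shows "DD n s > 0"
proof (cases "s \<ge> 0")
  case True thus ?thesis using DD_pos_nonneg[OF n] by auto
next
  case False
  hence s: "s < 0" by simp
  show ?thesis
  proof (cases "n \<ge> 0")
    case True
    have "DD n 0 \<le> DD n s"
    proof (rule DERIV_nonpos_imp_nonincreasing[where f = "DD n"])
      show "s \<le> 0" using s by simp
      fix x assume "s \<le> x" "x \<le> 0"
      show "\<exists>y. DERIV (DD n) x :> y \<and> y \<le> 0"
        using DD_deriv[OF n, of x] I_pos[of "n+1" x] n True
        by (intro exI[of _ "- n * I (n+1) x / 2"]) (auto intro!: mult_nonneg_nonneg)
    qed
    thus ?thesis using DD_pos_nonneg[OF n, of 0] by simp
  next
    case False
    hence sst: "sstar n = Sup (ereal ` {t. (n + 2) * f (n + 2) t + t = 0})" unfolding sstar_def by simp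
    show ?thesis
    proof (rule ccontr)
      assume "\<not> DD n s > 0"
      hence "DD n s \<le> 0" by simp
      moreover have "0 \<le> DD n 0" using DD_pos_nonneg[OF n, of 0] by simp
      ultimately obtain t where t: "t \<ge> s" "t \<le> 0" "DD n t = 0"
        using IVT[of "DD n" s 0 0] s DD_cont[OF n] by auto
      have ibp: "I (n+1+4) t + t * I (n+1+2) t = (n+1+1) * I (n+1) t"
        by (rule IBP) (use n in auto)
      have e: "n+1+4 = n+2+3" "n+1+2 = n+2+1" "n+1+1 = n+2" "n+2+1 = n+3" by simp_all
      have I1: "I (n+1) t > 0" by (rule I_pos) (use n in auto)
      have fe: "f (n+2) t = I (n+3) t / ((n+2) * I (n+1) t)"
        using f_eq[of "n+2" t] n ibp unfolding DD_def e by simp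
      have "(n + 2) * f (n + 2) t = I (n+3) t / I (n+1) t"
        unfolding fe using n by simp
      hence "(n + 2) * f (n + 2) t + t = DD n t / I (n+1) t"
        unfolding DD_def using I1 by (simp add: field_simps)
      hence "t \<in> {t. (n + 2) * f (n + 2) t + t = 0}" using t by simp
      hence "ereal t \<le> sstar n" unfolding sst by (intro Sup_upper) auto
      moreover have "ereal s \<le> ereal t" using t by simp
      ultimately show False using ss by (meson leD order.strict_trans2 order_trans)
    qed
  qed
qed

lemma alg_ric:
  fixes A B D n s :: real
  assumes "D \<noteq> 0" "B = D - s * A"
  shows "((- B / 2) * D - A * (- n * A / 2)) / (D * D) = (n * (A / D)\<^sup>2 + s * (A / D) - 1) / 2"
  using assms(1) unfolding assms(2) by (simp add: field_simps power2_eq_square)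

lemma f_props:
  assumes n: "n \<ge> -2" and ss: "sstar n < ereal s"
  shows "0 < f n s \<and> (s > 0 \<longrightarrow> f n s \<le> 1/s) \<and>
         (f n has_real_derivative (n * (f n s)\<^sup>2 + s * f n s - 1) / 2) (at s)"
proof (cases "n = -2")
  case True
  hence s: "s > 0" using ss sstar_m2 by (simp add: zero_ereal_def)
  have fe: "f n = (\<lambda>t. 1 / t)" using True unfolding f_def by auto
  have der: "((\<lambda>t. 1 / t) has_real_derivative - 1 / s\<^sup>2) (at s)"
    using s by (auto intro!: derivative_eq_intros simp: power2_eq_square)
  have eq: "- 1 / s\<^sup>2 = (n * (1/s)\<^sup>2 + s * (1/s) - 1) / 2" using True s by (simp add: field_simps power2_eq_square)
  show ?thesis unfolding fe using s der[unfolded eq] by (intro conjI) auto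
next
  case False
  hence n2: "n > -2" using n by simp
  have D: "DD n s > 0" by (rule DD_pos[OF n2 ss])
  have I1: "I (n+1) s > 0" by (rule I_pos) (use n2 in auto)
  have I3: "I (n+3) s > 0" by (rule I_pos) (use n2 in auto)
  have fe: "f n = (\<lambda>t. I (n+1) t / DD n t)" using f_eq[OF n2] by auto
  have d1: "((\<lambda>t. I (n+1) t) has_real_derivative - I (n+1+2) s / 2) (at s)"
    by (rule I_deriv) (use n2 in auto)
  have e: "n+1+2 = n+3" by simp
  have dq: "((\<lambda>t. I (n+1) t / DD n t) has_real_derivative
      ((- I (n+3) s / 2) * DD n s - I (n+1) s * (- n * I (n+1) s / 2)) / (DD n s * DD n s)) (at s)"
    using DERIV_divide[OF d1 DD_deriv[OF n2, of s]] D unfolding e by simp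
  have eq: "((- I (n+3) s / 2) * DD n s - I (n+1) s * (- n * I (n+1) s / 2)) / (DD n s * DD n s)
     = (n * (I (n+1) s / DD n s)\<^sup>2 + s * (I (n+1) s / DD n s) - 1) / 2"
    using D by (intro alg_ric) (auto simp: DD_def)
  have pos: "0 < I (n+1) s / DD n s" using D I1 by simp
  have le: "s > 0 \<longrightarrow> I (n+1) s / DD n s \<le> 1/s"
  proof
    assume s: "s > 0"
    have "s * I (n+1) s \<le> DD n s" unfolding DD_def using I3 by simp
    thus "I (n+1) s / DD n s \<le> 1/s" using s D by (simp add: field_simps)
  qed
  show ?thesis unfolding fe using dq[unfolded eq] pos le by (intro conjI) auto
qed

lemma stay_pos:
  fixes g g' :: "real \<Rightarrow> real"
  assumes d: "\<And>t. t \<ge> a \<Longrightarrow> (g has_real_derivative g' t) (at t)"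
    and z: "\<And>t. t \<ge> a \<Longrightarrow> g t = 0 \<Longrightarrow> g' t > 0"
    and ga: "g a \<ge> 0" and t: "t > a"
  shows "g t > 0"
proof -
  have cont: "isCont g x" if "x \<ge> a" for x using d[OF that] by (rule DERIV_isCont)
  obtain e where e: "e > 0" "\<And>x. a < x \<Longrightarrow> x < a + e \<Longrightarrow> g x > 0"
  proof (cases "g a > 0")
    case True
    have "(g \<longlongrightarrow> g a) (at a)" using cont[of a] by (simp add: isCont_def)
    hence "eventually (\<lambda>x. g x > 0) (at a)" using True by (rule order_tendstoD(1))
    then obtain e where "e > 0" "\<And>x. x \<noteq> a \<Longrightarrow> dist x a < e \<Longrightarrow> g x > 0"
      unfolding eventually_at by auto
    thus ?thesis by (intro that[of e]) (auto simp: dist_real_def)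
  next
    case False
    hence "g a = 0" using ga by simp
    hence "g' a > 0" using z[of a] by simp
    then obtain e where e: "e > 0" "\<And>h. h > 0 \<Longrightarrow> h < e \<Longrightarrow> g a < g (a + h)"
      using DERIV_pos_inc_right[OF d[of a]] by auto
    show ?thesis
    proof (rule that[of e])
      show "e > 0" by fact
      fix x assume "a < x" "x < a + e"
      thus "g x > 0" using e(2)[of "x - a"] \<open>g a = 0\<close> by simp
    qed
  qed
  show ?thesis
  proof (cases "t < a + e")
    case True thus ?thesis using e t by auto
  next
    case False
    define a' where "a' = a + e/2"
    have a': "a < a'" "a' < t" "g a' > 0" using e False by (auto simp: a'_def)
    show ?thesis
    proof (rule ccontr)
      assume "\<not> g t > 0"
      define S where "S = {x \<in> {a'..t}. g x \<le> 0}"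
      have "continuous_on {a'..t} g" using cont a' by (intro continuous_at_imp_continuous_on) auto
      hence "closed S" unfolding S_def by (intro continuous_on_closed_Collect_le continuous_on_const) auto
      hence "compact ({a'..t} \<inter> S)" by (intro compact_Int_closed compact_Icc)
      moreover have "{a'..t} \<inter> S = S" by (auto simp: S_def)
      ultimately have "compact S" by simp
      moreover have "S \<noteq> {}" using \<open>\<not> g t > 0\<close> a' unfolding S_def by auto
      ultimately obtain m where m: "m \<in> S" "\<And>y. y \<in> S \<Longrightarrow> m \<le> y"
        using compact_attains_inf[of S] by auto
      have mS: "a' \<le> m" "m \<le> t" "g m \<le> 0" using m(1) by (auto simp: S_def)
      have "a' \<le> m" using mS by simp
      obtain x where x: "x \<ge> a'" "x \<le> m" "g x = 0"
        using IVT2[of g m 0 a'] mS a' cont by auto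
      hence "x \<in> S" using mS by (auto simp: S_def)
      hence "x = m" using m(2) x by force
      hence gm: "g m = 0" using x by simp
      have "g' m > 0" using z[OF _ gm] mS a' by simp
      then obtain e' where e': "e' > 0" "\<And>h. h > 0 \<Longrightarrow> h < e' \<Longrightarrow> g (m - h) < g m"
        using DERIV_pos_inc_left[OF d[of m]] mS a' by auto
      have ma: "m > a'" using gm a'(3) mS by (cases "m = a'") auto
      define h where "h = min (e'/2) ((m - a')/2)"
      have h: "h > 0" "h < e'" "m - h \<ge> a'" using e'(1) ma unfolding h_def min_def by (auto simp: field_simps)
      have "g (m - h) < 0" using e'(2)[OF h(1,2)] gm by simp
      hence "m - h \<in> S" using h mS by (auto simp: S_def)
      hence "m \<le> m - h" by (rule m(2))
      thus False using h by simp
    qed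
  qed
qed


lemma dom_mono: "sstar n < ereal s \<Longrightarrow> s \<le> t \<Longrightarrow> sstar n < ereal t"
  by (erule order.strict_trans2) simp

lemma part1:
  assumes n: "n \<ge> -2" and ss: "sstar n < ereal s1" and s12: "s1 < s2"
  shows "f n s2 < f n s1"
proof -
  define q where "q t = n * (f n t * f n t) + t * f n t - 1" for t
  have P: "0 < f n t \<and> (t > 0 \<longrightarrow> f n t \<le> 1/t) \<and> (f n has_real_derivative q t / 2) (at t)"
    if "t \<ge> s1" for t
    using f_props[OF n dom_mono[OF ss that]] unfolding q_def by (simp add: power2_eq_square)
  have neg: "q t < 0" if t: "t \<ge> s1" for t
  proof (rule ccontr)
    assume "\<not> q t < 0"
    hence q0: "q t \<ge> 0" by simp
    define qd where "qd x = (2 * n * f n x + x) * (q x / 2) + f n x" for x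
    have dq: "(q has_real_derivative qd x) (at x)" if "x \<ge> t" for x
    proof -
      have df: "(f n has_real_derivative q x / 2) (at x)" using P[of x] that t by simp
      have "((\<lambda>x. n * (f n x * f n x) + x * f n x - 1) has_real_derivative
          n * (q x / 2 * f n x + q x / 2 * f n x) + (1 * f n x + q x / 2 * x) - 0) (at x)"
        by (intro DERIV_diff DERIV_add DERIV_cmult DERIV_mult df DERIV_ident DERIV_const)
      moreover have "n * (q x / 2 * f n x + q x / 2 * f n x) + (1 * f n x + q x / 2 * x) - 0 = qd x"
        unfolding qd_def by (simp add: algebra_simps)
      ultimately show ?thesis unfolding q_def[abs_def] by simp
    qed
    have zq: "qd x > 0" if "x \<ge> t" "q x = 0" for x
      using P[of x] t that unfolding qd_def by auto
    have pos: "q x > 0" if "x > t" for x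
      using stay_pos[of t q qd, OF dq zq q0 that] by blast
    define t1 where "t1 = t + 1"
    have ft1: "f n t1 > 0" using P[of t1] t by (simp add: t1_def)
    define T where "T = max (t1 + 1) (1 / f n t1 + 1)"
    have T: "T > t1" "T > 0" "1 / T < f n t1"
    proof -
      show "T > t1" unfolding T_def by simp
      have "1 / f n t1 > 0" using ft1 by simp
      hence "T > 1 / f n t1" unfolding T_def by simp
      thus "T > 0" using \<open>1 / f n t1 > 0\<close> by linarith
      show "1 / T < f n t1" using \<open>T > 1 / f n t1\<close> ft1 \<open>1 / f n t1 > 0\<close>
        by (metis divide_less_eq_1_pos divide_divide_eq_left' divide_less_cancel le_less mult.commute nonzero_mult_div_cancel_right zero_less_divide_1_iff less_irrefl order.strict_trans one_divide_eq_0_iff)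
    qed
    have "f n t1 < f n T"
    proof (rule DERIV_pos_imp_increasing[OF T(1)])
      fix x assume "t1 \<le> x" "x \<le> T"
      hence "x > t" "x \<ge> s1" using t unfolding t1_def by auto
      thus "\<exists>y. DERIV (f n) x :> y \<and> y > 0" using P[of x] pos[of x] by auto
    qed
    moreover have "f n T \<le> 1 / T" using P[of T] T t by (auto simp: t1_def)
    ultimately show False using T(3) by linarith
  qed
  show ?thesis
  proof (rule DERIV_neg_imp_decreasing[OF s12])
    fix x assume "s1 \<le> x" "x \<le> s2"
    thus "\<exists>y. DERIV (f n) x :> y \<and> y < 0" using P[of x] neg[of x] by auto
  qed
qed

lemma alg_w:
  fixes a b n1 n2 t :: real
  shows "(n2 * b\<^sup>2 + t * b - 1) / 2 - (n1 * a\<^sup>2 + t * a - 1) / 2 = ((n2 - n1) * b\<^sup>2 + (b - a) * (n1 * (a + b) + t)) / 2"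
  by (simp add: field_simps power2_eq_square)

lemma part2:
  assumes n1: "-2 \<le> n1" and n12: "n1 < n2" and ss1: "sstar n1 < ereal s" and ss2: "sstar n2 < ereal s"
  shows "f n2 s < f n1 s"
proof (rule ccontr)
  assume "\<not> f n2 s < f n1 s"
  hence w0: "f n2 s - f n1 s \<ge> 0" by simp
  have n2: "-2 \<le> n2" using n1 n12 by simp
  define w where "w t = f n2 t - f n1 t" for t
  define wd where "wd t = (n2 * (f n2 t)\<^sup>2 + t * f n2 t - 1) / 2 - (n1 * (f n1 t)\<^sup>2 + t * f n1 t - 1) / 2" for t
  have P1: "0 < f n1 t \<and> (t > 0 \<longrightarrow> f n1 t \<le> 1/t) \<and> (f n1 has_real_derivative (n1 * (f n1 t)\<^sup>2 + t * f n1 t - 1) / 2) (at t)"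
    if "t \<ge> s" for t using f_props[OF n1 dom_mono[OF ss1 that]] .
  have P2: "0 < f n2 t \<and> (t > 0 \<longrightarrow> f n2 t \<le> 1/t) \<and> (f n2 has_real_derivative (n2 * (f n2 t)\<^sup>2 + t * f n2 t - 1) / 2) (at t)"
    if "t \<ge> s" for t using f_props[OF n2 dom_mono[OF ss2 that]] .
  have dw: "(w has_real_derivative wd t) (at t)" if "t \<ge> s" for t
    unfolding w_def[abs_def] wd_def using P1[OF that] P2[OF that] by (intro DERIV_diff) auto
  have wid: "wd t = ((n2 - n1) * (f n2 t)\<^sup>2 + w t * (n1 * (f n1 t + f n2 t) + t)) / 2" for t
    unfolding wd_def w_def by (rule alg_w)
  have zw: "wd t > 0" if "t \<ge> s" "w t = 0" for t
  proof -
    have "(n2 - n1) * (f n2 t)\<^sup>2 > 0" using n12 P2[OF that(1)] by simp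
    thus ?thesis unfolding wid using that(2) by simp
  qed
  have pos: "w t > 0" if "t > s" for t
    using stay_pos[of s w wd, OF dw zw _ that] w0 unfolding w_def by blast
  define t1 where "t1 = max (s + 1) 3"
  have t1: "t1 > s" "t1 \<ge> 3" unfolding t1_def by auto
  have wt1: "w t1 > 0" using pos t1 by simp
  have incr: "wd x > 0" if "x \<ge> t1" for x
  proof -
    have xs: "x \<ge> s" "x > s" "x \<ge> 3" using that t1 by auto
    have u: "0 < f n1 x" "f n1 x \<le> 1/x" using P1[OF xs(1)] xs by auto
    have v: "0 < f n2 x" "f n2 x \<le> 1/x" using P2[OF xs(1)] xs by auto
    have "1/x \<le> 1/3" using xs by (simp add: field_simps)
    hence uv: "f n1 x + f n2 x \<le> 2/3" using u v by linarith
    have "n1 * (f n1 x + f n2 x) \<ge> -2 * (f n1 x + f n2 x)"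
      using n1 u v by (intro mult_right_mono) auto
    moreover have key: "\<And>y::real. y \<le> 2/3 \<Longrightarrow> -2*y \<le> n1*y \<Longrightarrow> 0 < n1*y + x" using xs by linarith
    ultimately have "n1 * (f n1 x + f n2 x) + x > 0" using uv by blast
    moreover have "w x > 0" using pos xs by simp
    moreover have "(n2 - n1) * (f n2 x)\<^sup>2 > 0" using n12 v by simp
    ultimately show ?thesis unfolding wid by (simp add: add_pos_pos)
  qed
  define T where "T = max (t1 + 1) (1 / w t1 + 1)"
  have iw: "1 / w t1 > 0" using wt1 by simp
  have T: "T > t1" "T > 1 / w t1" unfolding T_def by auto
  have T0: "T > 0" using T iw by linarith
  have T3: "1 / T < w t1"
  proof -
    have "w t1 * T > w t1 * (1 / w t1)" using T(2) wt1 by (intro mult_strict_left_mono) auto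
    hence "w t1 * T > 1" using wt1 by simp
    thus ?thesis using T0 by (simp add: field_simps)
  qed
  have "w t1 < w T"
  proof (rule DERIV_pos_imp_increasing[OF T(1)])
    fix x assume "t1 \<le> x" "x \<le> T"
    thus "\<exists>y. DERIV w x :> y \<and> y > 0" using dw[of x] incr[of x] t1 by (intro exI[of _ "wd x"]) auto
  qed
  moreover have "w T < 1 / T"
  proof -
    have "T \<ge> s" using T t1 by simp
    hence "f n1 T > 0" "f n2 T \<le> 1 / T" using P1 P2 T0 by auto
    thus ?thesis unfolding w_def by simp
  qed
  ultimately show False using T3 by linarith
qed

theorem lemmaA1:
  shows "(\<forall>n s1 s2. -2 \<le> n \<and> sstar n < ereal s1 \<and> s1 < s2 \<longrightarrow> f n s2 < f n s1)
       \<and> (\<forall>s n1 n2. -2 \<le> n1 \<and> n1 < n2 \<and> sstar n1 < ereal s \<and> sstar n2 < ereal s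
             \<longrightarrow> f n2 s < f n1 s)"
  using part1 part2 by blast

end
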